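(* Let $0<\sigma\le\theta$ and $n\geq1$. The function $f(\beta,\gamma)=\alpha_\beta\bigl(\varphi^n_{\sqrt{\gamma},\sigma},\varphi^n_{0,\theta}\bigr)$, defined for $\beta\in[0,1]$, $\gamma\ge 0$, is non-increasing in $\gamma$ for every fixed $\beta\in[0,1]$, and convex and non-increasing in $\beta$ for every fixed $\gamma>0$.
   Context: $\varphi_{\mu,\sigma}(y)=\frac{1}{\sqrt{2\pi}\sigma}e^{-(y-\mu)^2/(2\sigma^2)}$; $\varphi^n_{\mu,\sigma}$ is the distribution on $\mathbb{R}^n$ of $n$ i.i.d. $\mathcal{N}(\mu,\sigma^2)$ coordinates (so $\varphi^n_{\sqrt\gamma,\sigma}$ has mean vector $(\sqrt\gamma,\dots,\sqrt\gamma)$). For distributions $A,B$ on $\mathcal{Z}$, $\alpha_\beta(A,B)=\inf\{1-\mathbb{E}_A[T]:\ T:\mathcal{Z}\to[0,1],\ \mathbb{E}_B[T]\le\beta\}$. *)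

theory Defs
  imports "HOL-Probability.Probability"
begin

(* n-fold product of N(mu, s^2) on R^n, with R^n represented as functions {..<n} -> real *)
definition gauss_prod :: "nat \<Rightarrow> real \<Rightarrow> real \<Rightarrow> (nat \<Rightarrow> real) measure" where
  "gauss_prod n mu s = PiM {..<n} (\<lambda>_. density lborel (normal_density mu s))"

definition alpha_beta :: "real \<Rightarrow> 'a measure \<Rightarrow> 'a measure \<Rightarrow> real" where
  "alpha_beta \<beta> A B = Inf {1 - (\<integral>x. T x \<partial>A) | T.
      T \<in> borel_measurable B \<and> (\<forall>x\<in>space B. 0 \<le> T x \<and> T x \<le> 1) \<and> (\<integral>x. T x \<partial>B) \<le> \<beta>}"

end

theory Submission
  imports Defs
begin



definition tests :: "real \<Rightarrow> 'a measure \<Rightarrow> ('a \<Rightarrow> real) set" where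
  "tests \<beta> B = {T. T \<in> borel_measurable B \<and> (\<forall>x\<in>space B. 0 \<le> T x \<and> T x \<le> 1) \<and> (\<integral>x. T x \<partial>B) \<le> \<beta>}"

lemma alpha_beta_tests: "alpha_beta \<beta> A B = Inf ((\<lambda>T. 1 - (\<integral>x. T x \<partial>A)) ` tests \<beta> B)"
  unfolding alpha_beta_def tests_def by (rule arg_cong[where f=Inf]) auto

locale two_ps =
  fixes A B :: "'a measure"
  assumes PA: "prob_space A" and PB: "prob_space B" and SAB: "sets A = sets B"
begin

lemma space_AB: "space A = space B" using SAB by (rule sets_eq_imp_space_eq)

lemma test_int_bounds:
  assumes "T \<in> tests \<beta> B"
  shows "0 \<le> (\<integral>x. T x \<partial>A)" "(\<integral>x. T x \<partial>A) \<le> 1" "0 \<le> (\<integral>x. T x \<partial>B)" "(\<integral>x. T x \<partial>B) \<le> 1"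
proof -
  have mB: "T \<in> borel_measurable B" and b: "\<And>x. x \<in> space B \<Longrightarrow> 0 \<le> T x \<and> T x \<le> 1"
    using assms by (auto simp: tests_def)
  have mA: "T \<in> borel_measurable A" using mB by (simp add: measurable_cong_sets[OF SAB refl])
  interpret A: prob_space A by (rule PA)
  interpret B: prob_space B by (rule PB)
  show "0 \<le> (\<integral>x. T x \<partial>A)" using b space_AB by (intro integral_nonneg_AE) auto
  show "0 \<le> (\<integral>x. T x \<partial>B)" using b by (intro integral_nonneg_AE) auto
  have "(\<integral>x. T x \<partial>A) \<le> (\<integral>x. 1 \<partial>A)"
    using b space_AB mA by (intro integral_mono_AE A.integrable_const_bound[where B=1]) auto
  then show "(\<integral>x. T x \<partial>A) \<le> 1" by (simp add: A.prob_space)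
  have "(\<integral>x. T x \<partial>B) \<le> (\<integral>x. 1 \<partial>B)"
    using b mB by (intro integral_mono_AE B.integrable_const_bound[where B=1]) auto
  then show "(\<integral>x. T x \<partial>B) \<le> 1" by (simp add: B.prob_space)
qed

lemma zero_test: "0 \<le> \<beta> \<Longrightarrow> (\<lambda>x. 0) \<in> tests \<beta> B"
  by (auto simp: tests_def)

lemma bdd: "bdd_below ((\<lambda>T. 1 - (\<integral>x. T x \<partial>A)) ` tests \<beta> B)"
  by (rule bdd_belowI[where m=0]) (use test_int_bounds in force)

lemma ab_le: "T \<in> tests \<beta> B \<Longrightarrow> alpha_beta \<beta> A B \<le> 1 - (\<integral>x. T x \<partial>A)"
  unfolding alpha_beta_tests by (rule cInf_lower[OF _ bdd]) auto

lemma ab_ge: "0 \<le> \<beta> \<Longrightarrow> (\<And>T. T \<in> tests \<beta> B \<Longrightarrow> c \<le> 1 - (\<integral>x. T x \<partial>A)) \<Longrightarrow> c \<le> alpha_beta \<beta> A B"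
  unfolding alpha_beta_tests using zero_test by (intro cInf_greatest) auto

lemma ab_approx:
  assumes "0 \<le> \<beta>" "0 < e"
  shows "\<exists>T\<in>tests \<beta> B. 1 - (\<integral>x. T x \<partial>A) < alpha_beta \<beta> A B + e"
proof -
  have "Inf ((\<lambda>T. 1 - (\<integral>x. T x \<partial>A)) ` tests \<beta> B) < alpha_beta \<beta> A B + e"
    using assms unfolding alpha_beta_tests by simp
  then show ?thesis
    using zero_test[OF assms(1)] by (subst (asm) cInf_less_iff[OF _ bdd]) auto
qed

lemma ab_antimono: "0 \<le> \<beta> \<Longrightarrow> \<beta> \<le> \<beta>' \<Longrightarrow> alpha_beta \<beta>' A B \<le> alpha_beta \<beta> A B"
  by (rule ab_ge) (auto intro!: ab_le simp: tests_def)

lemma ab_convex: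
  assumes b1: "0 \<le> \<beta>1" and b2: "0 \<le> \<beta>2" and u: "0 \<le> u" and v: "0 \<le> v" and uv: "u + v = 1"
  shows "alpha_beta (u * \<beta>1 + v * \<beta>2) A B \<le> u * alpha_beta \<beta>1 A B + v * alpha_beta \<beta>2 A B"
proof (rule field_le_epsilon)
  fix e :: real assume e: "0 < e"
  obtain T1 where T1: "T1 \<in> tests \<beta>1 B" "1 - (\<integral>x. T1 x \<partial>A) < alpha_beta \<beta>1 A B + e"
    using ab_approx[OF b1 e] by blast
  obtain T2 where T2: "T2 \<in> tests \<beta>2 B" "1 - (\<integral>x. T2 x \<partial>A) < alpha_beta \<beta>2 A B + e"
    using ab_approx[OF b2 e] by blast
  interpret A: prob_space A by (rule PA)
  interpret B: prob_space B by (rule PB)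
  have m1: "T1 \<in> borel_measurable B" and bd1: "\<And>x. x \<in> space B \<Longrightarrow> 0 \<le> T1 x \<and> T1 x \<le> 1"
    and l1: "(\<integral>x. T1 x \<partial>B) \<le> \<beta>1" using T1 by (auto simp: tests_def)
  have m2: "T2 \<in> borel_measurable B" and bd2: "\<And>x. x \<in> space B \<Longrightarrow> 0 \<le> T2 x \<and> T2 x \<le> 1"
    and l2: "(\<integral>x. T2 x \<partial>B) \<le> \<beta>2" using T2 by (auto simp: tests_def)
  have m1A: "T1 \<in> borel_measurable A" using m1 by (simp add: measurable_cong_sets[OF SAB refl])
  have m2A: "T2 \<in> borel_measurable A" using m2 by (simp add: measurable_cong_sets[OF SAB refl])
  have iB1: "integrable B T1" using bd1 m1 by (intro B.integrable_const_bound[where B=1]) auto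
  have iB2: "integrable B T2" using bd2 m2 by (intro B.integrable_const_bound[where B=1]) auto
  have iA1: "integrable A T1" using bd1 m1A space_AB by (intro A.integrable_const_bound[where B=1]) auto
  have iA2: "integrable A T2" using bd2 m2A space_AB by (intro A.integrable_const_bound[where B=1]) auto
  define T where "T = (\<lambda>x. u * T1 x + v * T2 x)"
  have intB: "(\<integral>x. T x \<partial>B) = u * (\<integral>x. T1 x \<partial>B) + v * (\<integral>x. T2 x \<partial>B)"
    unfolding T_def using iB1 iB2 by simp
  have intA: "(\<integral>x. T x \<partial>A) = u * (\<integral>x. T1 x \<partial>A) + v * (\<integral>x. T2 x \<partial>A)"
    unfolding T_def using iA1 iA2 by simp
  have "T \<in> tests (u * \<beta>1 + v * \<beta>2) B"
    unfolding tests_def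
  proof (intro CollectI conjI ballI)
    show "T \<in> borel_measurable B" unfolding T_def using m1 m2 by measurable
    fix x assume x: "x \<in> space B"
    show "0 \<le> T x" unfolding T_def using bd1[OF x] bd2[OF x] u v by simp
    have "T x \<le> u * 1 + v * 1" unfolding T_def using bd1[OF x] bd2[OF x] u v
      by (intro add_mono mult_left_mono) auto
    then show "T x \<le> 1" using uv by simp
  next
    show "(\<integral>x. T x \<partial>B) \<le> u * \<beta>1 + v * \<beta>2"
      unfolding intB using l1 l2 u v by (intro add_mono mult_left_mono) auto
  qed
  then have "alpha_beta (u * \<beta>1 + v * \<beta>2) A B \<le> 1 - (\<integral>x. T x \<partial>A)" by (rule ab_le)
  also have "\<dots> = u * (1 - (\<integral>x. T1 x \<partial>A)) + v * (1 - (\<integral>x. T2 x \<partial>A))"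
    unfolding intA using uv by (simp add: algebra_simps)
  also have "\<dots> \<le> u * (alpha_beta \<beta>1 A B + e) + v * (alpha_beta \<beta>2 A B + e)"
    using T1(2) T2(2) u v by (intro add_mono mult_left_mono) auto
  also have "\<dots> = u * alpha_beta \<beta>1 A B + v * alpha_beta \<beta>2 A B + e * (u + v)"
    by (simp add: algebra_simps)
  also have "\<dots> = u * alpha_beta \<beta>1 A B + v * alpha_beta \<beta>2 A B + e"
    using uv by simp
  finally show "alpha_beta (u * \<beta>1 + v * \<beta>2) A B \<le> u * alpha_beta \<beta>1 A B + v * alpha_beta \<beta>2 A B + e" .
qed

end




lemma nd_sq_mono:
  assumes "z1\<^sup>2 \<le> z2\<^sup>2"
  shows "normal_density 0 \<theta> z2 \<le> normal_density 0 \<theta> z1"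
proof -
  have "- z2\<^sup>2 / (2 * \<theta>\<^sup>2) \<le> - z1\<^sup>2 / (2 * \<theta>\<^sup>2)"
    using assms by (intro divide_right_mono) auto
  then show ?thesis unfolding normal_density_def
    by (intro mult_left_mono) auto
qed

lemma pointwise_and:
  fixes g :: "real \<Rightarrow> real"
  assumes gm: "\<And>x y. x \<le> y \<Longrightarrow> g y \<le> g x" and a: "0 \<le> a" "a \<le> a'"
  shows "0 \<le> (g ((y - a)\<^sup>2 + s) - g ((y - a')\<^sup>2 + s)) *
              (normal_density 0 \<theta> y - normal_density 0 \<theta> (a + a' - y))"
proof (cases "2 * y \<le> a + a'")
  case True
  have "(y - a)\<^sup>2 \<le> (y - a')\<^sup>2"
  proof -
    have "(y - a')\<^sup>2 - (y - a)\<^sup>2 = (a' - a) * (a + a' - 2 * y)" by (simp add: power2_eq_square algebra_simps)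
    also have "\<dots> \<ge> 0" using True a by simp
    finally show ?thesis by simp
  qed
  then have 1: "0 \<le> g ((y - a)\<^sup>2 + s) - g ((y - a')\<^sup>2 + s)" using gm[of "(y - a)\<^sup>2 + s"] by simp
  have "y\<^sup>2 \<le> (a + a' - y)\<^sup>2"
  proof -
    have "(a + a' - y)\<^sup>2 - y\<^sup>2 = (a + a') * (a + a' - 2 * y)" by (simp add: power2_eq_square algebra_simps)
    also have "\<dots> \<ge> 0" using True a by simp
    finally show ?thesis by simp
  qed
  then have 2: "0 \<le> normal_density 0 \<theta> y - normal_density 0 \<theta> (a + a' - y)" using nd_sq_mono by simp
  show ?thesis using 1 2 by simp
next
  case False
  have "(y - a')\<^sup>2 \<le> (y - a)\<^sup>2"
  proof -
    have "(y - a)\<^sup>2 - (y - a')\<^sup>2 = (a' - a) * (2 * y - (a + a'))" by (simp add: power2_eq_square algebra_simps)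
    also have "\<dots> \<ge> 0" using False a by simp
    finally show ?thesis by simp
  qed
  then have 1: "g ((y - a)\<^sup>2 + s) - g ((y - a')\<^sup>2 + s) \<le> 0" using gm[of "(y - a')\<^sup>2 + s"] by simp
  have "(a + a' - y)\<^sup>2 \<le> y\<^sup>2"
  proof -
    have "y\<^sup>2 - (a + a' - y)\<^sup>2 = (a + a') * (2 * y - (a + a'))" by (simp add: power2_eq_square algebra_simps)
    also have "\<dots> \<ge> 0" using False a by simp
    finally show ?thesis by simp
  qed
  then have 2: "normal_density 0 \<theta> y - normal_density 0 \<theta> (a + a' - y) \<le> 0" using nd_sq_mono by simp
  show ?thesis using 1 2 by (simp add: mult_nonpos_nonpos)
qed

lemma antimono_measurable:
  fixes g :: "real \<Rightarrow> real"
  assumes gm: "\<And>x y. x \<le> y \<Longrightarrow> g y \<le> g x"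
  shows "g \<in> borel_measurable borel"
proof -
  have "mono (\<lambda>x. - g x)" using gm by (auto simp: mono_def)
  then have "(\<lambda>x. - g x) \<in> borel_measurable borel" by (rule borel_measurable_mono)
  then have "(\<lambda>x. - (- g x)) \<in> borel_measurable borel" by measurable
  then show ?thesis by simp
qed

lemma nd_reflect: "normal_density 0 \<theta> (c - y) = normal_density c \<theta> y"
  unfolding normal_density_def by (simp add: power2_commute)

lemma anderson1:
  fixes g :: "real \<Rightarrow> real"
  assumes gm: "\<And>x y. x \<le> y \<Longrightarrow> g y \<le> g x" and gb: "\<And>x. 0 \<le> g x \<and> g x \<le> 1"
    and a: "0 \<le> a" "a \<le> a'" and th: "0 < \<theta>"
  shows "(\<integral>y. g ((y - a')\<^sup>2 + s) \<partial>density lborel (normal_density 0 \<theta>))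
       \<le> (\<integral>y. g ((y - a)\<^sup>2 + s) \<partial>density lborel (normal_density 0 \<theta>))"
proof -
  note gmeas[measurable] = antimono_measurable[OF gm]
  define \<phi> where "\<phi> = normal_density 0 \<theta>"
  define c where "c = a + a'"
  define h1 where "h1 = (\<lambda>y. g ((y - a)\<^sup>2 + s))"
  define h2 where "h2 = (\<lambda>y. g ((y - a')\<^sup>2 + s))"
  have [measurable]: "h1 \<in> borel_measurable borel" "h2 \<in> borel_measurable borel"
    unfolding h1_def h2_def by measurable
  have int: "integrable lborel (\<lambda>y. normal_density m \<theta> y * h y)"
    if [measurable]: "h \<in> borel_measurable borel" and hb: "\<And>y. 0 \<le> h y \<and> h y \<le> 1" for h m
  proof (rule Bochner_Integration.integrable_bound[where f="normal_density m \<theta>"])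
    show "integrable lborel (normal_density m \<theta>)" using th by simp
    show "(\<lambda>y. normal_density m \<theta> y * h y) \<in> borel_measurable lborel" by measurable
    show "AE x in lborel. norm (normal_density m \<theta> x * h x) \<le> norm (normal_density m \<theta> x)"
      using hb by (auto intro!: AE_I2 simp: abs_mult intro!: mult_left_le)
  qed
  have b1: "\<And>y. 0 \<le> h1 y \<and> h1 y \<le> 1" and b2: "\<And>y. 0 \<le> h2 y \<and> h2 y \<le> 1"
    unfolding h1_def h2_def using gb by auto
  have X1: "(\<integral>y. h1 y \<partial>density lborel \<phi>) = (\<integral>y. \<phi> y * h1 y \<partial>lborel)"
    unfolding \<phi>_def by (subst integral_density) auto
  have X2: "(\<integral>y. h2 y \<partial>density lborel \<phi>) = (\<integral>y. \<phi> y * h2 y \<partial>lborel)"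
    unfolding \<phi>_def by (subst integral_density) auto
  have refl: "(\<integral>y. \<phi> y * hh y \<partial>lborel) = (\<integral>y. \<phi> (c - y) * hh (c - y) \<partial>lborel)" for hh :: "real \<Rightarrow> real"
    using lborel_integral_real_affine[of "-1" "\<lambda>y. \<phi> y * hh y" c] by simp
  have h2r: "h2 (c - y) = h1 y" for y
    unfolding h1_def h2_def c_def by (simp add: power2_commute)
  have h1r: "h1 (c - y) = h2 y" for y
    unfolding h1_def h2_def c_def by (simp add: power2_commute)
  have X3: "(\<integral>y. \<phi> y * h2 y \<partial>lborel) = (\<integral>y. \<phi> (c - y) * h1 y \<partial>lborel)"
    using refl[of h2] h2r by simp
  have X4: "(\<integral>y. \<phi> y * h1 y \<partial>lborel) = (\<integral>y. \<phi> (c - y) * h2 y \<partial>lborel)"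
    using refl[of h1] h1r by simp
  have i1: "integrable lborel (\<lambda>y. \<phi> y * h1 y)" unfolding \<phi>_def by (rule int) (use b1 in auto)
  have i2: "integrable lborel (\<lambda>y. \<phi> y * h2 y)" unfolding \<phi>_def by (rule int) (use b2 in auto)
  have i3: "integrable lborel (\<lambda>y. \<phi> (c - y) * h1 y)" unfolding \<phi>_def nd_reflect by (rule int) (use b1 in auto)
  have i4: "integrable lborel (\<lambda>y. \<phi> (c - y) * h2 y)" unfolding \<phi>_def nd_reflect by (rule int) (use b2 in auto)
  have "0 \<le> (\<integral>y. (h1 y - h2 y) * (\<phi> y - \<phi> (c - y)) \<partial>lborel)"
    unfolding h1_def h2_def \<phi>_def c_def by (intro integral_nonneg_AE AE_I2 pointwise_and[OF gm a])
  also have "(\<integral>y. (h1 y - h2 y) * (\<phi> y - \<phi> (c - y)) \<partial>lborel) =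
      (\<integral>y. \<phi> y * h1 y - \<phi> (c - y) * h1 y - \<phi> y * h2 y + \<phi> (c - y) * h2 y \<partial>lborel)"
    by (simp add: algebra_simps)
  also have "\<dots> = (\<integral>y. \<phi> y * h1 y \<partial>lborel) - (\<integral>y. \<phi> (c - y) * h1 y \<partial>lborel)
       - (\<integral>y. \<phi> y * h2 y \<partial>lborel) + (\<integral>y. \<phi> (c - y) * h2 y \<partial>lborel)"
    using i1 i2 i3 i4 by simp
  also have "\<dots> = 2 * ((\<integral>y. \<phi> y * h1 y \<partial>lborel) - (\<integral>y. \<phi> y * h2 y \<partial>lborel))"
    using X3 X4 by simp
  finally show ?thesis using X1 X2 unfolding h1_def h2_def \<phi>_def by simp
qed




lemma prob_bounded_int:
  fixes h :: "'a \<Rightarrow> real"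
  assumes P: "prob_space M" and m: "h \<in> borel_measurable M" and b: "\<And>x. x \<in> space M \<Longrightarrow> 0 \<le> h x \<and> h x \<le> 1"
  shows "integrable M h" "0 \<le> (\<integral>x. h x \<partial>M)" "(\<integral>x. h x \<partial>M) \<le> 1"
proof -
  interpret P: prob_space M by (rule P)
  show i: "integrable M h" using m b by (intro P.integrable_const_bound[where B=1]) auto
  show "0 \<le> (\<integral>x. h x \<partial>M)" using b by (intro integral_nonneg_AE) auto
  have "(\<integral>x. h x \<partial>M) \<le> (\<integral>x. 1 \<partial>M)" using b i by (intro integral_mono_AE) auto
  then show "(\<integral>x. h x \<partial>M) \<le> 1" by (simp add: P.prob_space)
qed

abbreviation NN :: "real \<Rightarrow> real \<Rightarrow> real measure" where
  "NN \<mu> s \<equiv> density lborel (normal_density \<mu> s)"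

lemma andersonN:
  fixes I :: "nat set" and a a' :: "nat \<Rightarrow> real" and g :: "real \<Rightarrow> real"
  assumes I: "finite I" and th: "0 < \<theta>"
    and a: "\<And>i. i \<in> I \<Longrightarrow> 0 \<le> a i" "\<And>i. i \<in> I \<Longrightarrow> a i \<le> a' i"
    and gm: "\<And>x y. x \<le> y \<Longrightarrow> g y \<le> g x" and gb: "\<And>x. 0 \<le> g x \<and> g x \<le> 1"
  shows "(\<integral>x. g (\<Sum>i\<in>I. (x i - a' i)\<^sup>2) \<partial>PiM I (\<lambda>_. NN 0 \<theta>))
       \<le> (\<integral>x. g (\<Sum>i\<in>I. (x i - a i)\<^sup>2) \<partial>PiM I (\<lambda>_. NN 0 \<theta>))"
  using I a gm gb
proof (induction I arbitrary: g rule: finite_induct)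
  case empty
  show ?case by simp
next
  case (insert j I g)
  have PN: "prob_space (NN 0 \<theta>)" using th by (rule prob_space_normal_density)
  interpret S: product_sigma_finite "\<lambda>_::nat. NN 0 \<theta>"
    by (simp add: product_sigma_finite_def prob_space_imp_sigma_finite[OF PN])
  note gmeas[measurable] = antimono_measurable[OF insert.prems(3)]
  have PP: "prob_space (PiM J (\<lambda>_. NN 0 \<theta>))" for J :: "nat set"
    by (rule prob_space_PiM) (rule PN)
  have sp: "space (NN 0 \<theta>) = UNIV" by simp
  have split: "(\<integral>x. g (\<Sum>i\<in>insert j I. (x i - b i)\<^sup>2) \<partial>PiM (insert j I) (\<lambda>_. NN 0 \<theta>))
     = (\<integral>x. (\<integral>y. g ((y - b j)\<^sup>2 + (\<Sum>i\<in>I. (x i - b i)\<^sup>2)) \<partial>NN 0 \<theta>) \<partial>PiM I (\<lambda>_. NN 0 \<theta>))"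
    for b :: "nat \<Rightarrow> real"
  proof -
    have "integrable (PiM (insert j I) (\<lambda>_. NN 0 \<theta>)) (\<lambda>x. g (\<Sum>i\<in>insert j I. (x i - b i)\<^sup>2))"
      by (rule prob_bounded_int[OF PP]) (use insert.prems in auto)
    then have "(\<integral>x. g (\<Sum>i\<in>insert j I. (x i - b i)\<^sup>2) \<partial>PiM (insert j I) (\<lambda>_. NN 0 \<theta>))
       = (\<integral>x. (\<integral>y. g (\<Sum>i\<in>insert j I. ((x(j:=y)) i - b i)\<^sup>2) \<partial>NN 0 \<theta>) \<partial>PiM I (\<lambda>_. NN 0 \<theta>))"
      by (rule S.product_integral_insert[OF insert.hyps(1,2)])
    also have "\<dots> = (\<integral>x. (\<integral>y. g ((y - b j)\<^sup>2 + (\<Sum>i\<in>I. (x i - b i)\<^sup>2)) \<partial>NN 0 \<theta>) \<partial>PiM I (\<lambda>_. NN 0 \<theta>))"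
    proof -
      have "(\<Sum>i\<in>insert j I. ((x(j:=y)) i - b i)\<^sup>2) = (y - b j)\<^sup>2 + (\<Sum>i\<in>I. (x i - b i)\<^sup>2)" for x y
        using insert.hyps by (simp add: sum.insert) (intro sum.cong, auto)
      then show ?thesis by simp
    qed
    finally show ?thesis .
  qed
  define G where "G = (\<lambda>b u. \<integral>y. g ((y - b)\<^sup>2 + u) \<partial>NN 0 \<theta>)"
  have Gint: "integrable (NN 0 \<theta>) (\<lambda>y. g ((y - b)\<^sup>2 + u))" for b u
    by (rule prob_bounded_int[OF PN]) (use insert.prems in auto)
  have Gmono: "G b v \<le> G b u" if "u \<le> v" for b u v
    unfolding G_def using that insert.prems(3) by (intro integral_mono[OF Gint Gint]) auto
  have Gb: "0 \<le> G b u \<and> G b u \<le> 1" for b u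
    unfolding G_def using prob_bounded_int[OF PN, of "\<lambda>y. g ((y - b)\<^sup>2 + u)"] insert.prems(4) by auto
  note Gmeas[measurable] = antimono_measurable[of "G b" for b, OF Gmono]
  have "(\<integral>x. g (\<Sum>i\<in>insert j I. (x i - a' i)\<^sup>2) \<partial>PiM (insert j I) (\<lambda>_. NN 0 \<theta>))
      = (\<integral>x. G (a' j) (\<Sum>i\<in>I. (x i - a' i)\<^sup>2) \<partial>PiM I (\<lambda>_. NN 0 \<theta>))"
    unfolding split G_def ..
  also have "\<dots> \<le> (\<integral>x. G (a' j) (\<Sum>i\<in>I. (x i - a i)\<^sup>2) \<partial>PiM I (\<lambda>_. NN 0 \<theta>))"
    by (rule insert.IH) (use Gmono Gb insert.prems in auto)
  also have "\<dots> \<le> (\<integral>x. G (a j) (\<Sum>i\<in>I. (x i - a i)\<^sup>2) \<partial>PiM I (\<lambda>_. NN 0 \<theta>))"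
  proof (rule integral_mono)
    show "integrable (PiM I (\<lambda>_. NN 0 \<theta>)) (\<lambda>x. G (a' j) (\<Sum>i\<in>I. (x i - a i)\<^sup>2))"
      by (rule prob_bounded_int[OF PP]) (use Gb in auto)
    show "integrable (PiM I (\<lambda>_. NN 0 \<theta>)) (\<lambda>x. G (a j) (\<Sum>i\<in>I. (x i - a i)\<^sup>2))"
      by (rule prob_bounded_int[OF PP]) (use Gb in auto)
    fix x
    show "G (a' j) (\<Sum>i\<in>I. (x i - a i)\<^sup>2) \<le> G (a j) (\<Sum>i\<in>I. (x i - a i)\<^sup>2)"
      unfolding G_def
      by (rule anderson1[OF insert.prems(3,4)]) (use insert.prems th in auto)
  qed
  also have "\<dots> = (\<integral>x. g (\<Sum>i\<in>insert j I. (x i - a i)\<^sup>2) \<partial>PiM (insert j I) (\<lambda>_. NN 0 \<theta>))"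
    unfolding split G_def ..
  finally show ?case .
qed




lemma PiM_density:
  fixes M :: "'a measure" and f :: "'a \<Rightarrow> real" and I :: "nat set"
  assumes I: "finite I" and PM: "prob_space M" and PD: "prob_space (density M f)"
    and fm[measurable]: "f \<in> borel_measurable M" and fnn: "\<And>x. 0 \<le> f x"
  shows "PiM I (\<lambda>_. density M f) = density (PiM I (\<lambda>_. M)) (\<lambda>x. \<Prod>i\<in>I. f (x i))"
proof -
  interpret D: product_sigma_finite "\<lambda>_::nat. density M f"
    by (simp add: product_sigma_finite_def prob_space_imp_sigma_finite[OF PD])
  interpret S: product_sigma_finite "\<lambda>_::nat. M"
    by (simp add: product_sigma_finite_def prob_space_imp_sigma_finite[OF PM])
  show ?thesis
  proof (rule D.PiM_eqI[symmetric, OF I])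
    show "sets (density (Pi\<^sub>M I (\<lambda>_. M)) (\<lambda>x. \<Prod>i\<in>I. f (x i))) = sets (Pi\<^sub>M I (\<lambda>_. density M f))"
      by (subst sets_density, rule sets_PiM_cong) auto
    fix A assume A: "\<And>i. i \<in> I \<Longrightarrow> A i \<in> sets (density M f)"
    then have A': "\<And>i. i \<in> I \<Longrightarrow> A i \<in> sets M" by simp
    have PiA: "Pi\<^sub>E I A \<in> sets (Pi\<^sub>M I (\<lambda>_. M))" using A' by (rule sets_PiM_I_finite[OF I])
    have "emeasure (density (Pi\<^sub>M I (\<lambda>_. M)) (\<lambda>x. \<Prod>i\<in>I. f (x i))) (Pi\<^sub>E I A)
        = (\<integral>\<^sup>+ x. ennreal (\<Prod>i\<in>I. f (x i)) * indicator (Pi\<^sub>E I A) x \<partial>Pi\<^sub>M I (\<lambda>_. M))"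
      using PiA by (subst emeasure_density) auto
    also have "\<dots> = (\<integral>\<^sup>+ x. (\<Prod>i\<in>I. ennreal (f (x i)) * indicator (A i) (x i)) \<partial>Pi\<^sub>M I (\<lambda>_. M))"
    proof (rule nn_integral_cong)
      fix x assume x: "x \<in> space (Pi\<^sub>M I (\<lambda>_. M))"
      have "indicator (Pi\<^sub>E I A) x = (\<Prod>i\<in>I. (indicator (A i) (x i) :: ennreal))"
      proof (cases "\<forall>i\<in>I. x i \<in> A i")
        case True
        then have "x \<in> Pi\<^sub>E I A" using x by (auto simp: space_PiM PiE_def extensional_def)
        then show ?thesis using True by simp
      next
        case False
        then obtain i where i: "i \<in> I" "x i \<notin> A i" by blast
        then have "x \<notin> Pi\<^sub>E I A" by auto
        moreover have "(\<Prod>i\<in>I. (indicator (A i) (x i) :: ennreal)) = 0"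
          using i I by (intro prod_zero bexI[of _ i]) auto
        ultimately show ?thesis by simp
      qed
      then show "ennreal (\<Prod>i\<in>I. f (x i)) * indicator (Pi\<^sub>E I A) x = (\<Prod>i\<in>I. ennreal (f (x i)) * indicator (A i) (x i))"
        by (simp add: prod.distrib prod_ennreal[symmetric] fnn)
    qed
    also have "\<dots> = (\<Prod>i\<in>I. \<integral>\<^sup>+ y. ennreal (f y) * indicator (A i) y \<partial>M)"
      using A' by (intro S.product_nn_integral_prod[OF I]) auto
    also have "\<dots> = (\<Prod>i\<in>I. emeasure (density M f) (A i))"
      using A' by (intro prod.cong refl) (simp add: emeasure_density)
    finally show "emeasure (density (Pi\<^sub>M I (\<lambda>_. M)) (\<lambda>x. \<Prod>i\<in>I. f (x i))) (Pi\<^sub>E I A) = (\<Prod>i\<in>I. emeasure (density M f) (A i))" .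
  qed
qed




lemma nd_shift: "normal_density (\<mu> + \<delta>) s (\<delta> + y) = normal_density \<mu> s y"
  unfolding normal_density_def by (simp add: algebra_simps)

lemma distr_shift:
  "distr (NN \<mu> s) (NN (\<mu> + \<delta>) s) (\<lambda>y. y + \<delta>) = NN (\<mu> + \<delta>) s"
proof (rule measure_eqI)
  show "sets (distr (NN \<mu> s) (NN (\<mu> + \<delta>) s) (\<lambda>y. y + \<delta>)) = sets (NN (\<mu> + \<delta>) s)" by simp
  fix A assume "A \<in> sets (distr (NN \<mu> s) (NN (\<mu> + \<delta>) s) (\<lambda>y. y + \<delta>))"
  then have A[measurable]: "A \<in> sets borel" by simp
  have pre[measurable]: "(\<lambda>y. y + \<delta>) -` A \<in> sets borel"
  proof -
    have "(\<lambda>y::real. y + \<delta>) \<in> borel \<rightarrow>\<^sub>M borel" by measurable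
    from measurable_sets[OF this A] show ?thesis by simp
  qed
  have "emeasure (distr (NN \<mu> s) (NN (\<mu> + \<delta>) s) (\<lambda>y. y + \<delta>)) A
      = emeasure (NN \<mu> s) ((\<lambda>y. y + \<delta>) -` A \<inter> space (NN \<mu> s))"
    by (subst emeasure_distr) auto
  also have "\<dots> = (\<integral>\<^sup>+ y. ennreal (normal_density \<mu> s y) * indicator A (y + \<delta>) \<partial>lborel)"
    by (subst emeasure_density) (auto intro!: nn_integral_cong simp: indicator_def)
  also have "\<dots> = (\<integral>\<^sup>+ y. ennreal (normal_density (\<mu> + \<delta>) s (\<delta> + y)) * indicator A (\<delta> + 1 * y) \<partial>lborel)"
    using nd_shift[of \<mu> \<delta> s] by (simp add: add.commute[of \<delta>])
  also have "\<dots> = (\<integral>\<^sup>+ z. ennreal (normal_density (\<mu> + \<delta>) s z) * indicator A z \<partial>lborel)"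
    using nn_integral_real_affine[of "\<lambda>z. ennreal (normal_density (\<mu> + \<delta>) s z) * indicator A z" 1 \<delta>]
    by simp
  also have "\<dots> = emeasure (NN (\<mu> + \<delta>) s) A"
    by (subst emeasure_density) auto
  finally show "emeasure (distr (NN \<mu> s) (NN (\<mu> + \<delta>) s) (\<lambda>y. y + \<delta>)) A = emeasure (NN (\<mu> + \<delta>) s) A" .
qed




lemma PiM_shift:
  assumes I: "finite I" and s: "0 < s"
  shows "distr (PiM I (\<lambda>_. NN \<mu> s)) (PiM I (\<lambda>_. NN (\<mu> + \<delta>) s)) (compose I (\<lambda>y. y + \<delta>))
       = PiM I (\<lambda>_::nat. NN (\<mu> + \<delta>) s)"
proof -
  have "distr (PiM I (\<lambda>_. NN \<mu> s)) (PiM I (\<lambda>_. NN (\<mu> + \<delta>) s)) (compose I (\<lambda>y. y + \<delta>))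
       = PiM I (\<lambda>i. distr (NN \<mu> s) (NN (\<mu> + \<delta>) s) (\<lambda>y. y + \<delta>))"
    by (rule distr_PiM_finite_prob_space[OF I])
       (auto intro!: product_prob_spaceI prob_space_normal_density s)
  then show ?thesis by (simp add: distr_shift)
qed

lemma integral_shift:
  fixes h :: "(nat \<Rightarrow> real) \<Rightarrow> real"
  assumes I: "finite I" and s: "0 < s" and hm: "h \<in> borel_measurable (PiM I (\<lambda>_::nat. NN (\<mu> + \<delta>) s))"
  shows "(\<integral>x. h x \<partial>PiM I (\<lambda>_. NN (\<mu> + \<delta>) s)) = (\<integral>x. h (compose I (\<lambda>y. y + \<delta>) x) \<partial>PiM I (\<lambda>_. NN \<mu> s))"
proof -
  have m: "compose I (\<lambda>y. y + \<delta>) \<in> measurable (PiM I (\<lambda>_. NN \<mu> s)) (PiM I (\<lambda>_::nat. NN (\<mu> + \<delta>) s))"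
    unfolding compose_def by measurable
  show ?thesis
    using integral_distr[OF m hm] PiM_shift[OF I s, of \<mu> \<delta>] by simp
qed




definition npg :: "real \<Rightarrow> real \<Rightarrow> real \<Rightarrow> real" where
  "npg t l u = (if u < t then 1 else if u = t then l else 0)"

lemma npg_antimono: "0 \<le> l \<Longrightarrow> l \<le> 1 \<Longrightarrow> x \<le> y \<Longrightarrow> npg t l y \<le> npg t l x"
  unfolding npg_def by auto

lemma npg_bounds: "0 \<le> l \<Longrightarrow> l \<le> 1 \<Longrightarrow> 0 \<le> npg t l x \<and> npg t l x \<le> 1"
  unfolding npg_def by auto

lemma npg_measurable[measurable]: "npg t l \<in> borel_measurable borel"
  unfolding npg_def by measurable

lemma npg_ind: "npg t l u = indicator {..<t} u + l * indicator {t} u"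
  unfolding npg_def by (auto simp: indicator_def)

lemma level_exists:
  fixes Q :: "'a measure" and F :: "'a \<Rightarrow> real"
  assumes PQ: "prob_space Q" and Fm[measurable]: "F \<in> borel_measurable Q" and b: "0 < b" "b < 1"
  shows "\<exists>t l. 0 \<le> l \<and> l \<le> 1 \<and> (\<integral>x. npg t l (F x) \<partial>Q) = b"
proof -
  define M where "M = distr Q borel F"
  interpret R: real_distribution M
    unfolding M_def real_distribution_def real_distribution_axioms_def
    using prob_space.prob_space_distr[OF PQ Fm] by simp
  define S where "S = {t. b \<le> cdf M t}"
  have "(cdf M \<longlongrightarrow> 1) at_top" using R.cdf_lim_at_top_prob .
  then have "eventually (\<lambda>t. b < cdf M t) at_top" using b by (intro order_tendstoD) auto
  then obtain t1 where "b < cdf M t1" by (auto simp: eventually_at_top_linorder)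
  then have Sne: "S \<noteq> {}" unfolding S_def by (auto intro!: exI[of _ t1])
  have "eventually (\<lambda>t. cdf M t < b) at_bot" using R.cdf_lim_at_bot b by (intro order_tendstoD) auto
  then obtain N where N: "\<And>t. t \<le> N \<Longrightarrow> cdf M t < b" by (auto simp: eventually_at_bot_linorder)
  have Sbdd: "bdd_below S"
  proof (rule bdd_belowI[where m=N])
    fix x assume "x \<in> S"
    then have "b \<le> cdf M x" by (simp add: S_def)
    then show "N \<le> x" using N[of x] by (cases "x \<le> N") auto
  qed
  define t0 where "t0 = Inf S"
  have notS: "cdf M t < b" if "t < t0" for t
  proof (rule ccontr)
    assume "\<not> cdf M t < b" then have "t \<in> S" by (simp add: S_def)
    then have "t0 \<le> t" unfolding t0_def using Sbdd by (rule cInf_lower)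
    then show False using that by simp
  qed
  have c0: "b \<le> cdf M t0"
  proof (rule ccontr)
    assume "\<not> b \<le> cdf M t0"
    then have lt: "cdf M t0 < b" by simp
    have "(cdf M \<longlongrightarrow> cdf M t0) (at_right t0)"
      using R.cdf_is_right_cont[of t0] unfolding continuous_within by simp
    then have "eventually (\<lambda>t. cdf M t < b) (at_right t0)" using lt by (intro order_tendstoD)
    then obtain e where e: "e > t0" "\<And>t. t > t0 \<Longrightarrow> t < e \<Longrightarrow> cdf M t < b"
      by (subst (asm) eventually_at_right[of t0 "t0 + 1"]) auto
    have "Inf S < e" using e(1) unfolding t0_def .
    then obtain s where s: "s \<in> S" "s < e" using cInf_less_iff[OF Sne Sbdd] by auto
    have "t0 \<le> s" unfolding t0_def using s(1) Sbdd by (rule cInf_lower)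
    then show False
    proof (cases "s = t0")
      case True then show False using s lt by (auto simp: S_def)
    next
      case False
      then have "t0 < s" using \<open>t0 \<le> s\<close> by simp
      then have "cdf M s < b" using e(2) s(2) by blast
      then show False using s(1) by (simp add: S_def)
    qed
  qed
  define a0 where "a0 = measure M {..<t0}"
  have a0: "a0 \<le> b"
  proof -
    have "(cdf M \<longlongrightarrow> a0) (at_left t0)" unfolding a0_def by (rule R.cdf_at_left)
    moreover have "eventually (\<lambda>t. cdf M t \<le> b) (at_left t0)"
      using notS by (auto simp: eventually_at_left_real[of "t0 - 1"] intro!: eventually_mono[OF eventually_at_left_real[of "t0 - 1" t0]] less_imp_le)
    ultimately show ?thesis by (rule tendsto_upperbound) simp
  qed
  have split: "cdf M t0 = a0 + measure M {t0}"
  proof -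
    have "{..t0} = {..<t0} \<union> {t0}" by auto
    then have "cdf M t0 = measure M ({..<t0} \<union> {t0})" by (simp add: cdf_def)
    also have "\<dots> = a0 + measure M {t0}" unfolding a0_def
      by (rule R.finite_measure_Union) auto
    finally show ?thesis .
  qed
  define e0 where "e0 = measure M {t0}"
  have e0: "0 \<le> e0" unfolding e0_def by simp
  define l where "l = (if e0 = 0 then 0 else (b - a0) / e0)"
  have l: "0 \<le> l" "l \<le> 1" "a0 + l * e0 = b"
    using a0 c0 split e0 unfolding l_def e0_def[symmetric] by (auto simp: field_simps)
  have "(\<integral>x. npg t0 l (F x) \<partial>Q) = (\<integral>u. npg t0 l u \<partial>M)"
    unfolding M_def by (subst integral_distr) auto
  also have "\<dots> = (\<integral>u. indicator {..<t0} u + l * indicator {t0} u \<partial>M)"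
    unfolding npg_ind ..
  also have "\<dots> = a0 + l * e0"
  proof -
    have i1: "integrable M (indicator {..<t0} :: real \<Rightarrow> real)"
      by (rule integrable_real_indicator) (auto simp: less_top[symmetric])
    have i2: "integrable M (\<lambda>u. l * indicator {t0} u :: real)"
      by (intro integrable_mult_right integrable_real_indicator) (auto simp: less_top[symmetric])
    show ?thesis unfolding a0_def e0_def
      using Bochner_Integration.integral_add[OF i1 i2] by simp
  qed
  finally show ?thesis using l by blast
qed




lemma NP:
  fixes Q :: "'a measure" and F T :: "'a \<Rightarrow> real"
  assumes PQ: "prob_space Q" and Fm[measurable]: "F \<in> borel_measurable Q"
    and C: "0 < C" and ka: "0 \<le> \<kappa>"
    and PP: "prob_space (density Q (\<lambda>x. C * exp (- \<kappa> * F x)))"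
    and Tm[measurable]: "T \<in> borel_measurable Q" and Tb: "\<And>x. x \<in> space Q \<Longrightarrow> 0 \<le> T x \<and> T x \<le> 1"
    and l: "0 \<le> l" "l \<le> 1"
    and lev: "(\<integral>x. npg t l (F x) \<partial>Q) = (\<integral>x. T x \<partial>Q)"
  shows "(\<integral>x. T x \<partial>density Q (\<lambda>x. C * exp (- \<kappa> * F x)))
       \<le> (\<integral>x. npg t l (F x) \<partial>density Q (\<lambda>x. C * exp (- \<kappa> * F x)))"
proof -
  define L where "L = (\<lambda>x. C * exp (- \<kappa> * F x))"
  define G where "G = (\<lambda>x. npg t l (F x))"
  define k where "k = C * exp (- \<kappa> * t)"
  have Lm[measurable]: "L \<in> borel_measurable Q" unfolding L_def by measurable
  have Gm[measurable]: "G \<in> borel_measurable Q" unfolding G_def by measurable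
  have Lnn: "\<And>x. 0 \<le> L x" unfolding L_def using C by simp
  have Gb: "\<And>x. 0 \<le> G x \<and> G x \<le> 1" unfolding G_def using npg_bounds[OF l] by simp
  have PP': "prob_space (density Q L)" using PP unfolding L_def .
  have sp: "space (density Q L) = space Q" by simp
  have iTd: "integrable (density Q L) T"
    by (rule prob_bounded_int(1)[OF PP']) (use Tb in auto)
  have iGd: "integrable (density Q L) G"
    by (rule prob_bounded_int(1)[OF PP']) (use Gb in auto)
  have iLT: "integrable Q (\<lambda>x. L x * T x)"
    using iTd by (subst (asm) integrable_density) (auto simp: Lnn)
  have iLG: "integrable Q (\<lambda>x. L x * G x)"
    using iGd by (subst (asm) integrable_density) (auto simp: Lnn)
  have iT: "integrable Q T" by (rule prob_bounded_int(1)[OF PQ]) (use Tb in auto)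
  have iG: "integrable Q G" by (rule prob_bounded_int(1)[OF PQ]) (use Gb in auto)
  have eT: "(\<integral>x. T x \<partial>density Q L) = (\<integral>x. L x * T x \<partial>Q)"
    by (subst integral_density) (auto simp: Lnn)
  have eG: "(\<integral>x. G x \<partial>density Q L) = (\<integral>x. L x * G x \<partial>Q)"
    by (subst integral_density) (auto simp: Lnn)
  have pw: "0 \<le> (G x - T x) * (L x - k)" if x: "x \<in> space Q" for x
  proof -
    consider "F x < t" | "F x = t" | "F x > t" by linarith
    then show ?thesis
    proof cases
      case 1
      then have "G x = 1" unfolding G_def npg_def by simp
      then have a: "0 \<le> G x - T x" using Tb[OF x] by simp
      have "- \<kappa> * t \<le> - \<kappa> * F x" using 1 ka by (intro mult_left_mono_neg) auto
      then have "k \<le> L x" unfolding k_def L_def using C by simp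
      then show ?thesis using a by simp
    next
      case 2
      then have "L x = k" unfolding k_def L_def by simp
      then show ?thesis by simp
    next
      case 3
      then have "G x = 0" unfolding G_def npg_def by simp
      then have a: "G x - T x \<le> 0" using Tb[OF x] by simp
      have "- \<kappa> * F x \<le> - \<kappa> * t" using 3 ka by (intro mult_left_mono_neg) auto
      then have "L x \<le> k" unfolding k_def L_def using C by simp
      then show ?thesis using a by (simp add: mult_nonpos_nonpos)
    qed
  qed
  have "0 \<le> (\<integral>x. (G x - T x) * (L x - k) \<partial>Q)"
    using pw by (intro integral_nonneg_AE AE_I2) auto
  also have "(\<integral>x. (G x - T x) * (L x - k) \<partial>Q) = (\<integral>x. (L x * G x - L x * T x) - (k * G x - k * T x) \<partial>Q)"
    by (simp add: algebra_simps)
  also have "\<dots> = ((\<integral>x. L x * G x \<partial>Q) - (\<integral>x. L x * T x \<partial>Q)) - (k * (\<integral>x. G x \<partial>Q) - k * (\<integral>x. T x \<partial>Q))"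
    using iLT iLG iT iG by simp
  also have "\<dots> = (\<integral>x. L x * G x \<partial>Q) - (\<integral>x. L x * T x \<partial>Q)"
    using lev unfolding G_def by simp
  finally show ?thesis using eT eG unfolding L_def G_def by simp
qed




lemma dens_rep:
  fixes I :: "nat set"
  assumes I: "finite I" and s: "0 < \<sigma>" and th: "0 < \<theta>"
    and lr: "\<And>y. normal_density \<mu> \<sigma> y / normal_density 0 \<theta> y = C0 * exp (- \<kappa> * \<psi> y)"
  shows "PiM I (\<lambda>_. NN \<mu> \<sigma>) = density (PiM I (\<lambda>_. NN 0 \<theta>)) (\<lambda>x. C0 ^ card I * exp (- \<kappa> * (\<Sum>i\<in>I. \<psi> (x i))))"
proof -
  define ell where "ell = (\<lambda>y. normal_density \<mu> \<sigma> y / normal_density 0 \<theta> y)"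
  have ellm[measurable]: "ell \<in> borel_measurable borel" unfolding ell_def by measurable
  have ellnn: "\<And>y. 0 \<le> ell y" unfolding ell_def by simp
  have eq1: "density (NN 0 \<theta>) ell = NN \<mu> \<sigma>"
  proof -
    have "density (NN 0 \<theta>) ell = density lborel (\<lambda>x. ennreal (normal_density 0 \<theta> x) * ennreal (ell x))"
      by (subst density_density_eq) auto
    also have "(\<lambda>x. ennreal (normal_density 0 \<theta> x) * ennreal (ell x)) = (\<lambda>x. ennreal (normal_density \<mu> \<sigma> x))"
    proof
      fix x
      have "normal_density 0 \<theta> x * ell x = normal_density \<mu> \<sigma> x"
        unfolding ell_def using normal_density_pos[OF th, of 0 x] by simp
      then show "ennreal (normal_density 0 \<theta> x) * ennreal (ell x) = ennreal (normal_density \<mu> \<sigma> x)"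
        by (simp add: ennreal_mult[symmetric] ellnn)
    qed
    finally show ?thesis .
  qed
  have "PiM I (\<lambda>_. NN \<mu> \<sigma>) = PiM I (\<lambda>_. density (NN 0 \<theta>) ell)" by (simp add: eq1)
  also have "\<dots> = density (PiM I (\<lambda>_. NN 0 \<theta>)) (\<lambda>x. \<Prod>i\<in>I. ell (x i))"
    by (rule PiM_density[OF I]) (auto simp: eq1 ellnn intro!: prob_space_normal_density s th)
  also have "(\<lambda>x. \<Prod>i\<in>I. ell (x i)) = (\<lambda>x. C0 ^ card I * exp (- \<kappa> * (\<Sum>i\<in>I. \<psi> (x i))))"
  proof
    fix x
    have "(\<Prod>i\<in>I. ell (x i)) = (\<Prod>i\<in>I. C0 * exp (- \<kappa> * \<psi> (x i)))"
      unfolding ell_def lr ..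
    also have "\<dots> = C0 ^ card I * (\<Prod>i\<in>I. exp (- \<kappa> * \<psi> (x i)))"
      by (simp add: prod.distrib)
    also have "(\<Prod>i\<in>I. exp (- \<kappa> * \<psi> (x i))) = exp (- \<kappa> * (\<Sum>i\<in>I. \<psi> (x i)))"
      by (simp add: exp_sum[OF I] sum_distrib_left)
    finally show "(\<Prod>i\<in>I. ell (x i)) = C0 ^ card I * exp (- \<kappa> * (\<Sum>i\<in>I. \<psi> (x i)))" .
  qed
  finally show ?thesis .
qed




lemma main_generic:
  fixes I :: "nat set" and \<psi> :: "real \<Rightarrow> real" and T :: "(nat \<Rightarrow> real) \<Rightarrow> real"
  assumes I: "finite I" and s: "0 < \<sigma>" and th: "0 < \<theta>"
    and lr: "\<And>y. normal_density \<mu> \<sigma> y / normal_density 0 \<theta> y = C0 * exp (- \<kappa> * \<psi> y)"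
    and C0: "0 < C0" and ka: "0 \<le> \<kappa>" and \<psi>m[measurable]: "\<psi> \<in> borel_measurable borel"
    and AND: "\<And>g::real\<Rightarrow>real. (\<And>x y. x \<le> y \<Longrightarrow> g y \<le> g x) \<Longrightarrow> (\<And>x. 0 \<le> g x \<and> g x \<le> 1) \<Longrightarrow>
       (\<integral>x. g (\<Sum>i\<in>I. \<psi> (x i - \<delta>)) \<partial>PiM I (\<lambda>_. NN 0 \<theta>)) \<le> (\<integral>x. g (\<Sum>i\<in>I. \<psi> (x i)) \<partial>PiM I (\<lambda>_. NN 0 \<theta>))"
    and T: "T \<in> tests \<beta> (PiM I (\<lambda>_. NN 0 \<theta>))"
  shows "\<exists>T'\<in>tests \<beta> (PiM I (\<lambda>_. NN 0 \<theta>)).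
     (\<integral>x. T x \<partial>PiM I (\<lambda>_. NN \<mu> \<sigma>)) \<le> (\<integral>x. T' x \<partial>PiM I (\<lambda>_. NN (\<mu> + \<delta>) \<sigma>))"
proof -
  define Q where "Q = PiM I (\<lambda>_. NN 0 \<theta>)"
  define P1 where "P1 = PiM I (\<lambda>_. NN \<mu> \<sigma>)"
  define P2 where "P2 = PiM I (\<lambda>_. NN (\<mu> + \<delta>) \<sigma>)"
  have PQ: "prob_space Q" unfolding Q_def by (intro prob_space_PiM prob_space_normal_density th)
  have PP1: "prob_space P1" unfolding P1_def by (intro prob_space_PiM prob_space_normal_density s)
  have PP2: "prob_space P2" unfolding P2_def by (intro prob_space_PiM prob_space_normal_density s)
  have S1: "sets P1 = sets Q" unfolding P1_def Q_def by (rule sets_PiM_cong) auto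
  have S2: "sets P2 = sets Q" unfolding P2_def Q_def by (rule sets_PiM_cong) auto
  interpret tp: two_ps P1 Q using PP1 PQ S1 by (simp add: two_ps_def)
  have Tm[measurable]: "T \<in> borel_measurable Q" and Tb: "\<And>x. x \<in> space Q \<Longrightarrow> 0 \<le> T x \<and> T x \<le> 1"
    and Tl: "(\<integral>x. T x \<partial>Q) \<le> \<beta>" using T unfolding Q_def tests_def by auto
  have TQ: "T \<in> tests \<beta> Q" using T unfolding Q_def .
  define b' where "b' = (\<integral>x. T x \<partial>Q)"
  have b'01: "0 \<le> b'" "b' \<le> 1" unfolding b'_def using tp.test_int_bounds[OF TQ] by auto
  have iT1: "(\<integral>x. T x \<partial>P1) \<le> 1" using tp.test_int_bounds[OF TQ] by auto
  define F where "F = (\<lambda>x. \<Sum>i\<in>I. \<psi> (x i))"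
  have Fm[measurable]: "F \<in> borel_measurable Q" unfolding F_def Q_def by measurable
  define C where "C = C0 ^ card I"
  have C: "0 < C" unfolding C_def using C0 by simp
  have P1d: "P1 = density Q (\<lambda>x. C * exp (- \<kappa> * F x))"
    unfolding P1_def Q_def C_def F_def by (rule dens_rep[OF I s th lr])
  have spQ: "space Q = space P2" using S2 by (metis sets_eq_imp_space_eq)
  have sQ: "sets Q = sets P2" using S2 by simp
  consider "b' = 0" | "b' = 1" | "0 < b'" "b' < 1" using b'01 by linarith
  then have "\<exists>T'\<in>tests \<beta> Q. (\<integral>x. T x \<partial>P1) \<le> (\<integral>x. T' x \<partial>P2)"
  proof cases
    case 1
    have iTQ: "integrable Q T" by (rule prob_bounded_int(1)[OF PQ Tm Tb])
    have "AE x in Q. T x = 0"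
      using 1 iTQ Tb unfolding b'_def by (subst (asm) integral_nonneg_eq_0_iff_AE) auto
    then have "AE x in Q. C * exp (- \<kappa> * F x) * T x = 0" by auto
    then have "(\<integral>x. C * exp (- \<kappa> * F x) * T x \<partial>Q) = (\<integral>x. 0 \<partial>Q)"
      by (intro integral_cong_AE) auto
    moreover have "(\<integral>x. T x \<partial>P1) = (\<integral>x. C * exp (- \<kappa> * F x) * T x \<partial>Q)"
      unfolding P1d by (subst integral_density) (auto simp: C less_imp_le)
    ultimately have "(\<integral>x. T x \<partial>P1) \<le> (\<integral>x. 0 \<partial>P2)" by simp
    moreover have "(\<lambda>x. 0) \<in> tests \<beta> Q" using Tl 1 unfolding tests_def b'_def by auto
    ultimately show ?thesis by blast
  next
    case 2
    interpret P2: prob_space P2 by (rule PP2)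
    have "(\<integral>x. T x \<partial>P1) \<le> (\<integral>x. 1 \<partial>P2)" using iT1 by (simp add: P2.prob_space)
    moreover have "(\<lambda>x. 1) \<in> tests \<beta> Q" using Tl 2 PQ unfolding tests_def b'_def
      by (auto simp: prob_space.prob_space)
    ultimately show ?thesis by blast
  next
    case 3
    obtain t l where l: "0 \<le> l" "l \<le> 1" and lev: "(\<integral>x. npg t l (F x) \<partial>Q) = b'"
      using level_exists[OF PQ Fm 3] by blast
    have PPd: "prob_space (density Q (\<lambda>x. C * exp (- \<kappa> * F x)))" using PP1 P1d by simp
    have np: "(\<integral>x. T x \<partial>P1) \<le> (\<integral>x. npg t l (F x) \<partial>P1)"
      unfolding P1d by (rule NP[OF PQ Fm C ka PPd Tm]) (use Tb l lev in \<open>auto simp: b'_def\<close>)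
    define T' where "T' = (\<lambda>y. npg t l (\<Sum>i\<in>I. \<psi> (y i - \<delta>)))"
    have T'm[measurable]: "T' \<in> borel_measurable Q" unfolding T'_def Q_def by measurable
    have T'b: "\<And>y. 0 \<le> T' y \<and> T' y \<le> 1" unfolding T'_def using npg_bounds[OF l] by simp
    have "(\<integral>x. T' x \<partial>P2) = (\<integral>x. T' (compose I (\<lambda>y. y + \<delta>) x) \<partial>P1)"
      unfolding P2_def P1_def
      by (rule integral_shift[OF I s]) (unfold T'_def, measurable)
    also have "\<dots> = (\<integral>x. npg t l (F x) \<partial>P1)"
    proof -
      have "(\<Sum>i\<in>I. \<psi> (compose I (\<lambda>y. y + \<delta>) x i - \<delta>)) = (\<Sum>i\<in>I. \<psi> (x i))" for x
        by (rule sum.cong) (auto simp: compose_def)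
      then show ?thesis unfolding T'_def F_def by simp
    qed
    finally have eq: "(\<integral>x. T' x \<partial>P2) = (\<integral>x. npg t l (F x) \<partial>P1)" .
    have "(\<integral>x. T' x \<partial>Q) \<le> (\<integral>x. npg t l (F x) \<partial>Q)"
      unfolding T'_def F_def Q_def
      by (rule AND[of "npg t l"]) (use npg_antimono[OF l] npg_bounds[OF l] in auto)
    then have "T' \<in> tests \<beta> Q" using lev Tl T'b unfolding tests_def b'_def by auto
    then show ?thesis using np eq by (intro bexI[of _ T']) auto
  qed
  then show ?thesis unfolding Q_def P1_def P2_def .
qed




lemma uminus_meas: "(\<lambda>y::real. - y) \<in> borel_measurable borel"
  by measurable

lemma lr_ratio:
  assumes s: "0 < \<sigma>" and th: "0 < \<theta>"
  shows "normal_density \<mu> \<sigma> y / normal_density 0 \<theta> y = (\<theta> / \<sigma>) * exp (- (y - \<mu>)\<^sup>2 / (2 * \<sigma>\<^sup>2) + y\<^sup>2 / (2 * \<theta>\<^sup>2))"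
proof -
  have sq: "sqrt (2 * pi * \<sigma>\<^sup>2) = sqrt (2 * pi) * \<sigma>" "sqrt (2 * pi * \<theta>\<^sup>2) = sqrt (2 * pi) * \<theta>"
    using s th by (simp_all add: real_sqrt_mult)
  have "normal_density \<mu> \<sigma> y / normal_density 0 \<theta> y
     = (sqrt (2 * pi) * \<theta>) / (sqrt (2 * pi) * \<sigma>) * (exp (- (y - \<mu>)\<^sup>2 / (2 * \<sigma>\<^sup>2)) / exp (- y\<^sup>2 / (2 * \<theta>\<^sup>2)))"
    unfolding normal_density_def sq by (simp add: field_simps)
  also have "\<dots> = (\<theta> / \<sigma>) * exp (- (y - \<mu>)\<^sup>2 / (2 * \<sigma>\<^sup>2) + y\<^sup>2 / (2 * \<theta>\<^sup>2))"
    by (simp add: exp_diff[symmetric])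
  finally show ?thesis .
qed

lemma mono_gamma:
  fixes I :: "nat set" and T :: "(nat \<Rightarrow> real) \<Rightarrow> real"
  assumes I: "finite I" and s: "0 < \<sigma>" and st: "\<sigma> \<le> \<theta>" and mu: "0 \<le> \<mu>" and d: "0 \<le> \<delta>"
    and T: "T \<in> tests \<beta> (PiM I (\<lambda>_. NN 0 \<theta>))"
  shows "\<exists>T'\<in>tests \<beta> (PiM I (\<lambda>_. NN 0 \<theta>)).
     (\<integral>x. T x \<partial>PiM I (\<lambda>_. NN \<mu> \<sigma>)) \<le> (\<integral>x. T' x \<partial>PiM I (\<lambda>_. NN (\<mu> + \<delta>) \<sigma>))"
proof -
  have th: "0 < \<theta>" using s st by simp
  have prob: "prob_space (PiM I (\<lambda>_. NN 0 \<theta>))" by (intro prob_space_PiM prob_space_normal_density th)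
  show ?thesis
  proof (cases "\<sigma> = \<theta>")
    case True
    define C0 where "C0 = exp (- \<mu>\<^sup>2 / (2 * \<sigma>\<^sup>2))"
    define \<kappa> where "\<kappa> = \<mu> / \<sigma>\<^sup>2"
    have lr: "normal_density \<mu> \<sigma> y / normal_density 0 \<theta> y = C0 * exp (- \<kappa> * (- y))" for y
    proof -
      have "- (y - \<mu>)\<^sup>2 / (2 * \<sigma>\<^sup>2) + y\<^sup>2 / (2 * \<theta>\<^sup>2) = - \<mu>\<^sup>2 / (2 * \<sigma>\<^sup>2) + (- \<kappa> * (- y))"
        unfolding \<kappa>_def True using th by (simp add: field_simps power2_eq_square)
      then show ?thesis unfolding lr_ratio[OF s th] C0_def using True th by (simp add: exp_add[symmetric])
    qed
    show ?thesis
    proof (rule main_generic[OF I s th lr])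
      show "0 < C0" unfolding C0_def by simp
      show "0 \<le> \<kappa>" unfolding \<kappa>_def using mu by simp
      show "(\<lambda>y::real. - y) \<in> borel_measurable borel"
        by (rule uminus_meas)
      show "T \<in> tests \<beta> (PiM I (\<lambda>_. NN 0 \<theta>))" by (rule T)
      fix g :: "real \<Rightarrow> real" assume gm: "\<And>x y. x \<le> y \<Longrightarrow> g y \<le> g x" and gb: "\<And>x. 0 \<le> g x \<and> g x \<le> 1"
      note [measurable] = antimono_measurable[OF gm]
      show "(\<integral>x. g (\<Sum>i\<in>I. - (x i - \<delta>)) \<partial>PiM I (\<lambda>_. NN 0 \<theta>)) \<le> (\<integral>x. g (\<Sum>i\<in>I. - (x i)) \<partial>PiM I (\<lambda>_. NN 0 \<theta>))"
      proof (rule integral_mono)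
        show "integrable (PiM I (\<lambda>_. NN 0 \<theta>)) (\<lambda>x. g (\<Sum>i\<in>I. - (x i - \<delta>)))"
          by (rule prob_bounded_int(1)[OF prob]) (use gb in auto)
        show "integrable (PiM I (\<lambda>_. NN 0 \<theta>)) (\<lambda>x. g (\<Sum>i\<in>I. - (x i)))"
          by (rule prob_bounded_int(1)[OF prob]) (use gb in auto)
        fix x :: "nat \<Rightarrow> real"
        have "(\<Sum>i\<in>I. - (x i)) \<le> (\<Sum>i\<in>I. - (x i - \<delta>))" using d by (intro sum_mono) auto
        then show "g (\<Sum>i\<in>I. - (x i - \<delta>)) \<le> g (\<Sum>i\<in>I. - (x i))" by (rule gm)
      qed
    qed
  next
    case False
    then have lt: "\<sigma> < \<theta>" using st by simp
    define D where "D = 1 / \<sigma>\<^sup>2 - 1 / \<theta>\<^sup>2"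
    have D: "0 < D" unfolding D_def using lt s by (simp add: field_simps power_strict_mono)
    define b where "b = \<mu> / (\<sigma>\<^sup>2 * D)"
    have b: "0 \<le> b" unfolding b_def using mu D by simp
    have Db: "D * b = \<mu> / \<sigma>\<^sup>2" unfolding b_def using D s by (simp add: field_simps)
    define E where "E = D * b\<^sup>2 / 2 - \<mu>\<^sup>2 / (2 * \<sigma>\<^sup>2)"
    define C0 where "C0 = (\<theta> / \<sigma>) * exp E"
    define \<kappa> where "\<kappa> = D / 2"
    have lr: "normal_density \<mu> \<sigma> y / normal_density 0 \<theta> y = C0 * exp (- \<kappa> * (y - b)\<^sup>2)" for y
    proof -
      have e: "- (y - \<mu>)\<^sup>2 / (2 * \<sigma>\<^sup>2) + y\<^sup>2 / (2 * \<theta>\<^sup>2) = E + (- \<kappa> * (y - b)\<^sup>2)"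
      proof -
        have "E + (- \<kappa> * (y - b)\<^sup>2) = - \<mu>\<^sup>2 / (2 * \<sigma>\<^sup>2) - D * y\<^sup>2 / 2 + (D * b) * y"
          unfolding E_def \<kappa>_def by (simp add: power2_eq_square algebra_simps)
        also have "\<dots> = - \<mu>\<^sup>2 / (2 * \<sigma>\<^sup>2) - D * y\<^sup>2 / 2 + \<mu> / \<sigma>\<^sup>2 * y" unfolding Db ..
        also have "\<dots> = - (y - \<mu>)\<^sup>2 / (2 * \<sigma>\<^sup>2) + y\<^sup>2 / (2 * \<theta>\<^sup>2)"
          unfolding D_def using s th by (simp add: field_simps power2_eq_square)
        finally show ?thesis by simp
      qed
      show ?thesis unfolding lr_ratio[OF s th] C0_def e by (simp add: exp_add[symmetric])
    qed
    show ?thesis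
    proof (rule main_generic[OF I s th lr])
      show "0 < C0" unfolding C0_def using s th by simp
      show "0 \<le> \<kappa>" unfolding \<kappa>_def using D by simp
      show "(\<lambda>y. (y - b)\<^sup>2) \<in> borel_measurable borel" by measurable
      show "T \<in> tests \<beta> (PiM I (\<lambda>_. NN 0 \<theta>))" by (rule T)
      fix g :: "real \<Rightarrow> real" assume gm: "\<And>x y. x \<le> y \<Longrightarrow> g y \<le> g x" and gb: "\<And>x. 0 \<le> g x \<and> g x \<le> 1"
      have "(\<integral>x. g (\<Sum>i\<in>I. (x i - (b + \<delta>))\<^sup>2) \<partial>PiM I (\<lambda>_. NN 0 \<theta>)) \<le> (\<integral>x. g (\<Sum>i\<in>I. (x i - b)\<^sup>2) \<partial>PiM I (\<lambda>_. NN 0 \<theta>))"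
        by (rule andersonN[OF I th, of "\<lambda>_. b" "\<lambda>_. b + \<delta>" g]) (use b d gm gb in auto)
      then show "(\<integral>x. g (\<Sum>i\<in>I. (x i - \<delta> - b)\<^sup>2) \<partial>PiM I (\<lambda>_. NN 0 \<theta>)) \<le> (\<integral>x. g (\<Sum>i\<in>I. (x i - b)\<^sup>2) \<partial>PiM I (\<lambda>_. NN 0 \<theta>))"
        by (simp add: algebra_simps)
    qed
  qed
qed




lemma two_ps_gauss: "0 < \<sigma> \<Longrightarrow> 0 < \<theta> \<Longrightarrow> two_ps (gauss_prod n \<mu> \<sigma>) (gauss_prod n 0 \<theta>)"
  unfolding two_ps_def gauss_prod_def
  by (auto intro!: prob_space_PiM prob_space_normal_density sets_PiM_cong)

theorem lemma3:
  fixes \<sigma> \<theta> :: real and n :: nat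
  assumes "0 < \<sigma>" and "\<sigma> \<le> \<theta>" and "n \<ge> 1"
  defines "f \<equiv> (\<lambda>\<beta> \<gamma>. alpha_beta \<beta> (gauss_prod n (sqrt \<gamma>) \<sigma>) (gauss_prod n 0 \<theta>))"
  shows "(\<forall>\<beta>\<in>{0..1}. antimono_on {0..} (\<lambda>\<gamma>. f \<beta> \<gamma>)) \<and>
         (\<forall>\<gamma>>0. convex_on {0..1} (\<lambda>\<beta>. f \<beta> \<gamma>) \<and> antimono_on {0..1} (\<lambda>\<beta>. f \<beta> \<gamma>))"
proof (intro conjI ballI allI impI)
  have s: "0 < \<sigma>" and st: "\<sigma> \<le> \<theta>" using assms by auto
  have th: "0 < \<theta>" using s st by simp
  fix \<beta> :: real assume b: "\<beta> \<in> {0..1}"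
  show "antimono_on {0..} (\<lambda>\<gamma>. f \<beta> \<gamma>)"
    unfolding monotone_on_def
  proof (intro ballI impI)
    fix \<gamma>1 \<gamma>2 :: real assume g1: "\<gamma>1 \<in> {0..}" and g2: "\<gamma>2 \<in> {0..}" and le: "\<gamma>1 \<le> \<gamma>2"
    define \<mu> where "\<mu> = sqrt \<gamma>1"
    define \<delta> where "\<delta> = sqrt \<gamma>2 - sqrt \<gamma>1"
    have mu: "0 \<le> \<mu>" unfolding \<mu>_def using g1 by simp
    have d: "0 \<le> \<delta>" unfolding \<delta>_def using le by simp
    have md: "\<mu> + \<delta> = sqrt \<gamma>2" unfolding \<mu>_def \<delta>_def by simp
    interpret T1: two_ps "gauss_prod n \<mu> \<sigma>" "gauss_prod n 0 \<theta>" by (rule two_ps_gauss[OF s th])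
    interpret T2: two_ps "gauss_prod n (\<mu> + \<delta>) \<sigma>" "gauss_prod n 0 \<theta>" by (rule two_ps_gauss[OF s th])
    have "alpha_beta \<beta> (gauss_prod n (\<mu> + \<delta>) \<sigma>) (gauss_prod n 0 \<theta>) \<le> alpha_beta \<beta> (gauss_prod n \<mu> \<sigma>) (gauss_prod n 0 \<theta>)"
    proof (rule T1.ab_ge)
      show "0 \<le> \<beta>" using b by simp
      fix T assume T: "T \<in> tests \<beta> (gauss_prod n 0 \<theta>)"
      obtain T' where T': "T' \<in> tests \<beta> (gauss_prod n 0 \<theta>)"
        and le': "(\<integral>x. T x \<partial>gauss_prod n \<mu> \<sigma>) \<le> (\<integral>x. T' x \<partial>gauss_prod n (\<mu> + \<delta>) \<sigma>)"
        using mono_gamma[of "{..<n}" \<sigma> \<theta> \<mu> \<delta> T \<beta>] s st mu d T unfolding gauss_prod_def by auto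
      have "alpha_beta \<beta> (gauss_prod n (\<mu> + \<delta>) \<sigma>) (gauss_prod n 0 \<theta>) \<le> 1 - (\<integral>x. T' x \<partial>gauss_prod n (\<mu> + \<delta>) \<sigma>)"
        by (rule T2.ab_le[OF T'])
      also have "\<dots> \<le> 1 - (\<integral>x. T x \<partial>gauss_prod n \<mu> \<sigma>)" using le' by simp
      finally show "alpha_beta \<beta> (gauss_prod n (\<mu> + \<delta>) \<sigma>) (gauss_prod n 0 \<theta>) \<le> 1 - (\<integral>x. T x \<partial>gauss_prod n \<mu> \<sigma>)" .
    qed
    then show "f \<beta> \<gamma>2 \<le> f \<beta> \<gamma>1" unfolding f_def md[symmetric] \<mu>_def by simp
  qed
next
  have s: "0 < \<sigma>" and st: "\<sigma> \<le> \<theta>" using assms by auto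
  have th: "0 < \<theta>" using s st by simp
  fix \<gamma> :: real assume "0 < \<gamma>"
  interpret T: two_ps "gauss_prod n (sqrt \<gamma>) \<sigma>" "gauss_prod n 0 \<theta>" by (rule two_ps_gauss[OF s th])
  show "convex_on {0..1} (\<lambda>\<beta>. f \<beta> \<gamma>)"
    unfolding convex_on_def f_def
    by (auto simp: convex_real_interval intro!: T.ab_convex)
  show "antimono_on {0..1} (\<lambda>\<beta>. f \<beta> \<gamma>)"
    unfolding monotone_on_def f_def by (auto intro!: T.ab_antimono)
qed


end
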